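(* Let $(X_n,\|\cdot\|_n)_{n\ge1}$ be a sequence of finite dimensional real Banach spaces, each having a normalized $1$-unconditional basis, and let $(X,\|\cdot\|)$ be the space defined in the context. Then the closed unit ball $B_X$ of $X$ is compact in the topology of pointwise convergence, i.e. the coarsest topology on $X$ making each coordinate map $x=(x_n)\mapsto x_n\in X_n$ continuous. In particular, if $x_m\in X$ with $\|x_m\|\le1$ for all $m$ and $x\in X$ with $x_m\overset{p}{\to}x$, then $\|x\|\le1$.
   Context: $c_{00}((X_n))$ is the vector space of sequences $(x_1,x_2,\dots)$ with $x_k\in X_k$ and only finitely many $x_k\ne0$; $(x_1,\dots,x_n)$ denotes $(x_1,\dots,x_n,0,0,\dots)$. On $c_{00}((X_n))$ define inductively $\|(x_1)\|=\|x_1\|_1$ (the norm of $X_1$) and, for $n\ge2$, $$\|(x_1,\dots,x_n)\|=\Big(1-\tfrac{1}{n+1}\Big)\big(\|x_n\|_n+\|(x_1,\dots,x_{n-1})\|\big)+\tfrac{1}{n+1}\max\Big\{\tfrac{\|x_n\|_n}{n},\ \|(x_1,\dots,x_{n-1})\|\Big\}.$$ $X$ is the completion of $(c_{00}((X_n)),\|\cdot\|)$, identified with the space of sequences $x=(x_n)$, $x_n\in X_n$, with $\sum_n\|x_n\|_n<\infty$, where $\|x\|=\lim_k\|(x_1,\dots,x_k)\|$. For $x_m=(x_{m1},x_{m2},\dots)$ and $x=(x_1,x_2,\dots)$ in $X$, $x_m\overset{p}{\to}x$ means $\|x_{mn}-x_n\|_n\to0$ as $m\to\infty$ for every $n$.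 *)

theory Defs
  imports "HOL-Analysis.Analysis"
begin

text \<open>The paper's spaces X_1, X_2, ... are indexed here from 0:
  index n stands for the paper's X_(n+1). Each finite dimensional space X_(n+1)
  with its normalized 1-unconditional basis (e_i) is identified, via coordinates
  with respect to that basis, with the coordinate space
  V d n = {v :: nat => real. v i = 0 for i >= d n}, carrying the norm N n;
  the basis vector e_i is the i-th unit vector.\<close>

definition V :: "(nat \<Rightarrow> nat) \<Rightarrow> nat \<Rightarrow> (nat \<Rightarrow> real) set" where
  "V d n = {v. \<forall>i. d n \<le> i \<longrightarrow> v i = 0}"

definition unitvec :: "nat \<Rightarrow> nat \<Rightarrow> real" where
  "unitvec i = (\<lambda>j. if j = i then 1 else 0)"

definition is_norm_on :: "(nat \<Rightarrow> real) set \<Rightarrow> ((nat \<Rightarrow> real) \<Rightarrow> real) \<Rightarrow> bool" where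
  "is_norm_on S p \<longleftrightarrow>
     (\<forall>v\<in>S. 0 \<le> p v) \<and>
     (\<forall>v\<in>S. p v = 0 \<longleftrightarrow> v = (\<lambda>_. 0)) \<and>
     (\<forall>v\<in>S. \<forall>c::real. p (\<lambda>i. c * v i) = \<bar>c\<bar> * p v) \<and>
     (\<forall>v\<in>S. \<forall>w\<in>S. p (\<lambda>i. v i + w i) \<le> p v + p w)"

definition normalized_1_unconditional :: "nat \<Rightarrow> ((nat \<Rightarrow> real) \<Rightarrow> real) \<Rightarrow> bool" where
  "normalized_1_unconditional k p \<longleftrightarrow>
     (\<forall>i<k. p (unitvec i) = 1) \<and>
     (\<forall>a::nat \<Rightarrow> real. \<forall>eps::nat \<Rightarrow> real.
        (\<forall>i. eps i = 1 \<or> eps i = -1) \<longrightarrow>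
        p (\<lambda>j. \<Sum>i<k. eps i * a i * unitvec i j) = p (\<lambda>j. \<Sum>i<k. a i * unitvec i j))"

text \<open>Norm of the finite sequence (x_1,...,x_k) (paper indexing); pnorm N x k uses
  the entries x 0, ..., x (k-1) here.\<close>
fun pnorm :: "(nat \<Rightarrow> (nat \<Rightarrow> real) \<Rightarrow> real) \<Rightarrow> (nat \<Rightarrow> nat \<Rightarrow> real) \<Rightarrow> nat \<Rightarrow> real" where
  "pnorm N x 0 = 0"
| "pnorm N x (Suc 0) = N 0 (x 0)"
| "pnorm N x (Suc (Suc k)) =
     (let n = real (k + 2); a = N (Suc k) (x (Suc k)); p = pnorm N x (Suc k) in
      (1 - 1 / (n + 1)) * (a + p) + 1 / (n + 1) * max (a / n) p)"

definition Xspace :: "(nat \<Rightarrow> nat) \<Rightarrow> (nat \<Rightarrow> (nat \<Rightarrow> real) \<Rightarrow> real) \<Rightarrow> (nat \<Rightarrow> nat \<Rightarrow> real) set" where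
  "Xspace d N = {x. (\<forall>n. x n \<in> V d n) \<and> summable (\<lambda>n. N n (x n))}"

definition Xnorm :: "(nat \<Rightarrow> (nat \<Rightarrow> real) \<Rightarrow> real) \<Rightarrow> (nat \<Rightarrow> nat \<Rightarrow> real) \<Rightarrow> real" where
  "Xnorm N x = lim (\<lambda>k. pnorm N x k)"

definition unit_ball :: "(nat \<Rightarrow> nat) \<Rightarrow> (nat \<Rightarrow> (nat \<Rightarrow> real) \<Rightarrow> real) \<Rightarrow> (nat \<Rightarrow> nat \<Rightarrow> real) set" where
  "unit_ball d N = {x \<in> Xspace d N. Xnorm N x \<le> 1}"

definition Xn_top :: "(nat \<Rightarrow> nat) \<Rightarrow> (nat \<Rightarrow> (nat \<Rightarrow> real) \<Rightarrow> real) \<Rightarrow> nat \<Rightarrow> (nat \<Rightarrow> real) topology" where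
  "Xn_top d N n = topology (\<lambda>U. U \<subseteq> V d n \<and>
     (\<forall>v\<in>U. \<exists>e>0. \<forall>w\<in>V d n. N n (\<lambda>i. w i - v i) < e \<longrightarrow> w \<in> U))"

text \<open>Topology of pointwise convergence on X: the coarsest topology making every
  coordinate map x \<mapsto> x_n continuous, i.e. the product topology restricted to X.\<close>
definition pointwise_top :: "(nat \<Rightarrow> nat) \<Rightarrow> (nat \<Rightarrow> (nat \<Rightarrow> real) \<Rightarrow> real) \<Rightarrow> (nat \<Rightarrow> nat \<Rightarrow> real) topology" where
  "pointwise_top d N = subtopology (product_topology (Xn_top d N) UNIV) (Xspace d N)"

end

theory Submission
  imports Defs
begin


definition Vk :: "nat \<Rightarrow> (nat \<Rightarrow> real) set" where
  "Vk k = {v. \<forall>i. k \<le> i \<longrightarrow> v i = 0}"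

lemma V_Vk: "V d n = Vk (d n)" by (simp add: V_def Vk_def)

lemma sum_unitvec_Vk: "(\<lambda>j. \<Sum>i<m. a i * unitvec i j) \<in> Vk k" if "m \<le> k"
  using that by (auto simp: Vk_def unitvec_def)

lemma sum_unitvec_eq: "v \<in> Vk k \<Longrightarrow> (\<lambda>j. \<Sum>i<k. v i * unitvec i j) = v"
proof
  fix j assume v: "v \<in> Vk k"
  show "(\<Sum>i<k. v i * unitvec i j) = v j"
  proof (cases "j < k")
    case True
    then have "(\<Sum>i<k. v i * unitvec i j) = (\<Sum>i\<in>{j}. v i * unitvec i j)"
      by (intro sum.mono_neutral_right) (auto simp: unitvec_def)
    then show ?thesis by (simp add: unitvec_def)
  next
    case False
    then show ?thesis using v by (auto simp: Vk_def unitvec_def)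
  qed
qed

context
  fixes k :: nat and p :: "(nat \<Rightarrow> real) \<Rightarrow> real"
  assumes nrm: "is_norm_on (Vk k) p" and bas: "normalized_1_unconditional k p"
begin

lemma p_nonneg: "v \<in> Vk k \<Longrightarrow> 0 \<le> p v" using nrm by (simp add: is_norm_on_def)
lemma p_scale: "v \<in> Vk k \<Longrightarrow> p (\<lambda>i. c * v i) = \<bar>c\<bar> * p v" using nrm by (simp add: is_norm_on_def)
lemma p_tri: "v \<in> Vk k \<Longrightarrow> w \<in> Vk k \<Longrightarrow> p (\<lambda>i. v i + w i) \<le> p v + p w" using nrm by (simp add: is_norm_on_def)

lemma Vk_diff: "v \<in> Vk k \<Longrightarrow> w \<in> Vk k \<Longrightarrow> (\<lambda>i. v i - w i) \<in> Vk k" by (auto simp: Vk_def)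

lemma p_sym: "v \<in> Vk k \<Longrightarrow> w \<in> Vk k \<Longrightarrow> p (\<lambda>i. v i - w i) = p (\<lambda>i. w i - v i)"
proof -
  assume v: "v \<in> Vk k" and w: "w \<in> Vk k"
  have "p (\<lambda>i. (-1) * (w i - v i)) = p (\<lambda>i. w i - v i)"
    using p_scale[OF Vk_diff[OF w v], of "-1"] by simp
  then show ?thesis by simp
qed

lemma p_lip: "v \<in> Vk k \<Longrightarrow> w \<in> Vk k \<Longrightarrow> \<bar>p w - p v\<bar> \<le> p (\<lambda>i. w i - v i)"
proof -
  assume v: "v \<in> Vk k" and w: "w \<in> Vk k"
  have 1: "p w \<le> p v + p (\<lambda>i. w i - v i)"
    using p_tri[OF v Vk_diff[OF w v]] by simp
  have 2: "p v \<le> p w + p (\<lambda>i. v i - w i)"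
    using p_tri[OF w Vk_diff[OF v w]] by simp
  show ?thesis using 1 2 p_sym[OF v w] by linarith
qed

lemma p_sum_le: "m \<le> k \<Longrightarrow> p (\<lambda>j. \<Sum>i<m. a i * unitvec i j) \<le> (\<Sum>i<m. \<bar>a i\<bar>)"
proof (induction m)
  case 0
  have "p (\<lambda>i. 0 * (0::real)) = 0 * p (\<lambda>_. 0)"
    using p_scale[of "\<lambda>_. 0" 0] by (simp add: Vk_def)
  then show ?case by simp
next
  case (Suc m)
  have u: "unitvec m \<in> Vk k" using Suc.prems by (auto simp: Vk_def unitvec_def)
  have "p (\<lambda>j. \<Sum>i<Suc m. a i * unitvec i j)
      = p (\<lambda>j. (\<Sum>i<m. a i * unitvec i j) + a m * unitvec m j)" by simp
  also have "\<dots> \<le> p (\<lambda>j. \<Sum>i<m. a i * unitvec i j) + p (\<lambda>j. a m * unitvec m j)"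
    by (rule p_tri) (use Suc.prems sum_unitvec_Vk u in \<open>auto simp: Vk_def unitvec_def\<close>)
  also have "p (\<lambda>j. a m * unitvec m j) = \<bar>a m\<bar>"
    using p_scale[OF u, of "a m"] bas Suc.prems by (simp add: normalized_1_unconditional_def)
  finally show ?case using Suc by simp
qed

lemma p_le_sum: "v \<in> Vk k \<Longrightarrow> p v \<le> (\<Sum>i<k. \<bar>v i\<bar>)"
  using p_sum_le[of k v] sum_unitvec_eq[of v] by simp

lemma p_dist_le: "v \<in> Vk k \<Longrightarrow> w \<in> Vk k \<Longrightarrow> p (\<lambda>i. w i - v i) \<le> (\<Sum>i<k. \<bar>w i - v i\<bar>)"
  using p_le_sum[OF Vk_diff] by blast

lemma coord_le: assumes v: "v \<in> Vk k" and i: "i < k" shows "\<bar>v i\<bar> \<le> p v"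
proof -
  define eps where "eps = (\<lambda>j. if j = i then 1 else - 1 :: real)"
  define v' where "v' = (\<lambda>j. \<Sum>l<k. eps l * v l * unitvec l j)"
  have pv': "p v' = p v"
  proof -
    have "\<forall>i. eps i = 1 \<or> eps i = -1" by (simp add: eps_def)
    then have "p v' = p (\<lambda>j. \<Sum>l<k. v l * unitvec l j)"
      using bas unfolding normalized_1_unconditional_def v'_def by blast
    then show ?thesis using sum_unitvec_eq[OF v] by simp
  qed
  have v'V: "v' \<in> Vk k" unfolding v'_def using sum_unitvec_Vk[of k k "\<lambda>l. eps l * v l"] by simp
  have sumeq: "(\<lambda>j. v j + v' j) = (\<lambda>j. 2 * (v i * unitvec i j))"
  proof
    fix j
    have "v j + v' j = (\<Sum>l<k. v l * unitvec l j) + (\<Sum>l<k. eps l * v l * unitvec l j)"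
      using sum_unitvec_eq[OF v] unfolding v'_def by metis
    also have "\<dots> = (\<Sum>l<k. (1 + eps l) * v l * unitvec l j)"
      by (simp add: sum.distrib[symmetric] algebra_simps)
    also have "\<dots> = (\<Sum>l\<in>{i}. (1 + eps l) * v l * unitvec l j)"
      by (intro sum.mono_neutral_right) (use i in \<open>auto simp: eps_def\<close>)
    finally show "v j + v' j = 2 * (v i * unitvec i j)" by (simp add: eps_def)
  qed
  have u: "unitvec i \<in> Vk k" using i by (auto simp: Vk_def unitvec_def)
  have "p (\<lambda>j. 2 * (v i * unitvec i j)) = 2 * \<bar>v i\<bar>"
    using p_scale[OF u, of "v i"] p_scale[of "\<lambda>j. v i * unitvec i j" 2] bas i u
    by (auto simp: normalized_1_unconditional_def Vk_def)
  moreover have "p (\<lambda>j. v j + v' j) \<le> p v + p v'" by (rule p_tri[OF v v'V])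
  ultimately show ?thesis using sumeq pv' by simp
qed

definition openp :: "(nat \<Rightarrow> real) set \<Rightarrow> bool" where
  "openp U \<longleftrightarrow> U \<subseteq> Vk k \<and> (\<forall>v\<in>U. \<exists>e>0. \<forall>w\<in>Vk k. p (\<lambda>i. w i - v i) < e \<longrightarrow> w \<in> U)"

lemma istop: "istopology openp"
  unfolding istopology_def
proof (intro conjI allI impI)
  fix S T assume S: "openp S" and T: "openp T"
  show "openp (S \<inter> T)"
    unfolding openp_def
  proof (intro conjI ballI)
    show "S \<inter> T \<subseteq> Vk k" using S by (auto simp: openp_def)
    fix v assume "v \<in> S \<inter> T"
    then obtain e1 e2 where "e1 > 0" "\<forall>w\<in>Vk k. p (\<lambda>i. w i - v i) < e1 \<longrightarrow> w \<in> S"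
      "e2 > 0" "\<forall>w\<in>Vk k. p (\<lambda>i. w i - v i) < e2 \<longrightarrow> w \<in> T"
      using S T unfolding openp_def by blast
    then show "\<exists>e>0. \<forall>w\<in>Vk k. p (\<lambda>i. w i - v i) < e \<longrightarrow> w \<in> S \<inter> T"
      by (intro exI[of _ "min e1 e2"]) auto
  qed
next
  fix K assume K: "\<forall>U\<in>K. openp U"
  show "openp (\<Union>K)"
    unfolding openp_def
  proof (intro conjI ballI)
    show "\<Union>K \<subseteq> Vk k" using K by (auto simp: openp_def)
    fix v assume "v \<in> \<Union>K"
    then obtain U where "U \<in> K" "v \<in> U" by blast
    then obtain e where "e > 0" "\<forall>w\<in>Vk k. p (\<lambda>i. w i - v i) < e \<longrightarrow> w \<in> U"
      using K unfolding openp_def by blast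
    then show "\<exists>e>0. \<forall>w\<in>Vk k. p (\<lambda>i. w i - v i) < e \<longrightarrow> w \<in> \<Union>K"
      using \<open>U \<in> K\<close> by blast
  qed
qed

definition T :: "(nat \<Rightarrow> real) topology" where "T = topology openp"

lemma openin_T: "openin T U \<longleftrightarrow> openp U"
  using istop by (simp add: T_def)

lemma topspace_T: "topspace T = Vk k"
proof -
  have "openp (Vk k)" unfolding openp_def by (auto intro: exI[of _ 1])
  then have "Vk k \<subseteq> topspace T" using openin_T openin_subset by blast
  moreover have "topspace T \<subseteq> Vk k" using openin_T[of "topspace T"] by (simp add: openp_def)
  ultimately show ?thesis by blast
qed

lemma cont_p: "continuous_map T euclideanreal p"
  unfolding continuous_map_def topspace_T
proof (intro conjI allI impI)
  show "p \<in> Vk k \<rightarrow> topspace euclideanreal" by simp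
  fix U :: "real set" assume "openin euclideanreal U"
  then have oU: "open U" by simp
  show "openin T {x \<in> Vk k. p x \<in> U}"
    unfolding openin_T openp_def
  proof (intro conjI ballI)
    fix v assume v: "v \<in> {x \<in> Vk k. p x \<in> U}"
    then obtain e where e: "e > 0" "ball (p v) e \<subseteq> U" using oU open_contains_ball by blast
    show "\<exists>e>0. \<forall>w\<in>Vk k. p (\<lambda>i. w i - v i) < e \<longrightarrow> w \<in> {x \<in> Vk k. p x \<in> U}"
    proof (intro exI[of _ e] conjI ballI impI)
      fix w assume w: "w \<in> Vk k" "p (\<lambda>i. w i - v i) < e"
      then have "\<bar>p w - p v\<bar> < e" using p_lip[of v w] v by auto
      then have "p w \<in> ball (p v) e" by (simp add: dist_real_def abs_minus_commute)
      then show "w \<in> {x \<in> Vk k. p x \<in> U}" using e w by blast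
    qed (use e in auto)
  qed auto
qed

abbreviation P :: "(nat \<Rightarrow> real) topology" where
  "P \<equiv> product_topology (\<lambda>_. euclideanreal) UNIV"

definition box :: "(nat \<Rightarrow> real) \<Rightarrow> real \<Rightarrow> (nat \<Rightarrow> real) set" where
  "box c d = PiE UNIV (\<lambda>i. if i < k then ball (c i) d else UNIV)"

lemma open_box: "openin P (box c d)"
  unfolding box_def openin_PiE_gen
  by (rule disjI2, rule conjI, rule finite_subset[of _ "{..<k}"]) auto

lemma box_sum: assumes "w \<in> box c d" shows "(\<Sum>i<k. \<bar>w i - c i\<bar>) \<le> real k * d"
proof -
  have all: "\<forall>i. w i \<in> (if i < k then ball (c i) d else UNIV)" using assms by (simp add: box_def PiE_iff)
  have "\<bar>w i - c i\<bar> \<le> d" if "i \<in> {..<k}" for i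
  proof -
    have "w i \<in> ball (c i) d" using spec[OF all, of i] that by simp
    then show ?thesis by (simp add: dist_real_def abs_minus_commute)
  qed
  then have "(\<Sum>i<k. \<bar>w i - c i\<bar>) \<le> real (card {..<k}) * d"
    by (rule sum_bounded_above)
  then show ?thesis by simp
qed

lemma center_box: "d > 0 \<Longrightarrow> c \<in> box c d" by (auto simp: box_def)

definition Bp :: "real \<Rightarrow> (nat \<Rightarrow> real) set" where "Bp r = {v \<in> Vk k. p v \<le> r}"

lemma closed_Bp: "closedin P (Bp r)"
  unfolding closedin_def
proof (intro conjI)
  show "Bp r \<subseteq> topspace P" by simp
  show "openin P (topspace P - Bp r)"
  proof (subst openin_subopen, intro ballI)
    fix u assume u: "u \<in> topspace P - Bp r"
    show "\<exists>T. openin P T \<and> u \<in> T \<and> T \<subseteq> topspace P - Bp r"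
    proof (cases "u \<in> Vk k")
      case False
      then obtain i where i: "k \<le> i" "u i \<noteq> 0" by (auto simp: Vk_def)
      let ?T = "PiE UNIV (\<lambda>j. if j = i then - {0} else (UNIV :: real set))"
      have "openin P ?T"
        unfolding openin_PiE_gen
        by (rule disjI2, rule conjI, rule finite_subset[of _ "{i}"]) (auto simp: open_Compl)
      moreover have "?T \<subseteq> topspace P - Bp r"
      proof
        fix x assume "x \<in> ?T"
        then have allx: "\<forall>j. x j \<in> (if j = i then - {0} else UNIV)" by (simp add: PiE_iff)
        have "x i \<noteq> 0" using spec[OF allx, of i] by simp
        then show "x \<in> topspace P - Bp r" using i by (auto simp: Bp_def Vk_def)
      qed
      moreover have "u \<in> ?T" using i by (simp add: PiE_iff)
      ultimately show ?thesis by blast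
    next
      case True
      then have pu: "p u > r" using u by (auto simp: Bp_def)
      define d where "d = (p u - r) / (real k + 1)"
      have d: "d > 0" using pu by (simp add: d_def)
      have bsub: "box u d \<subseteq> topspace P - Bp r"
      proof
        fix w assume w: "w \<in> box u d"
        show "w \<in> topspace P - Bp r"
        proof (cases "w \<in> Vk k")
          case wV: True
          have "p u - p w \<le> p (\<lambda>i. u i - w i)" using p_lip[OF wV True] by simp
          also have "\<dots> = p (\<lambda>i. w i - u i)" using p_sym[OF True wV] .
          also have "\<dots> \<le> (\<Sum>i<k. \<bar>w i - u i\<bar>)" using p_dist_le[OF True wV] .
          also have "\<dots> \<le> real k * d" using box_sum[OF w] .
          also have "\<dots> < (real k + 1) * d" using d by simp
          also have "\<dots> = p u - r" using d_def by simp
          finally have "\<not> p w \<le> r" by simp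
          then show ?thesis by (simp add: Bp_def)
        next
          case False
          then show ?thesis by (simp add: Bp_def)
        qed
      qed
      have ob: "openin P (box u d)" by (rule open_box)
      have ub: "u \<in> box u d" by (rule center_box[OF d])
      show ?thesis by (rule exI[of _ "box u d"]) (use ob ub bsub in blast)
    qed
  qed
qed

definition Kbox :: "real \<Rightarrow> (nat \<Rightarrow> real) set" where
  "Kbox r = PiE UNIV (\<lambda>i. if i < k then {-r..r} else {0})"

lemma compact_Kbox: "compactin P (Kbox r)"
  unfolding Kbox_def compactin_PiE by auto

lemma Bp_Kbox: "Bp r \<subseteq> Kbox r"
proof
  fix v assume v: "v \<in> Bp r"
  have "-r \<le> v i \<and> v i \<le> r" if "i < k" for i using coord_le[of v i] v that by (auto simp: Bp_def)
  then show "v \<in> Kbox r" using v by (auto simp: Kbox_def Bp_def Vk_def)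
qed

lemma cont_id: "continuous_map (subtopology P (Bp r)) T id"
  unfolding continuous_map_def
proof (intro conjI allI impI)
  show "id \<in> topspace (subtopology P (Bp r)) \<rightarrow> topspace T"
    by (auto simp: topspace_T Bp_def)
  fix U assume U: "openin T U"
  show "openin (subtopology P (Bp r)) {x \<in> topspace (subtopology P (Bp r)). id x \<in> U}"
  proof (subst openin_subopen, intro ballI)
    fix v assume v: "v \<in> {x \<in> topspace (subtopology P (Bp r)). id x \<in> U}"
    then have vB: "v \<in> Bp r" and vU: "v \<in> U" by auto
    then obtain e where e: "e > 0" "\<forall>w\<in>Vk k. p (\<lambda>i. w i - v i) < e \<longrightarrow> w \<in> U"
      using U by (auto simp: openin_T openp_def)
    define d where "d = e / (real k + 1)"
    have d: "d > 0" using e by (simp add: d_def)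
    have sub: "box v d \<inter> Bp r \<subseteq> {x \<in> topspace (subtopology P (Bp r)). id x \<in> U}"
    proof
      fix w assume w: "w \<in> box v d \<inter> Bp r"
      have vV: "v \<in> Vk k" and wV: "w \<in> Vk k" using vB w by (auto simp: Bp_def)
      have "p (\<lambda>i. w i - v i) \<le> (\<Sum>i<k. \<bar>w i - v i\<bar>)" using p_dist_le[OF vV wV] .
      also have "\<dots> \<le> real k * d" using box_sum w by blast
      also have "\<dots> < (real k + 1) * d" using d by simp
      also have "\<dots> = e" using d_def by simp
      finally have "w \<in> U" using e wV by blast
      then show "w \<in> {x \<in> topspace (subtopology P (Bp r)). id x \<in> U}" using w by auto
    qed
    have "openin (subtopology P (Bp r)) (box v d \<inter> Bp r)"
      using open_box by (auto simp: openin_subtopology)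
    then show "\<exists>T. openin (subtopology P (Bp r)) T \<and> v \<in> T \<and> T \<subseteq> {x \<in> topspace (subtopology P (Bp r)). id x \<in> U}"
      using sub center_box[OF d] vB by blast
  qed
qed

lemma compact_Bp: "compactin T (Bp r)"
proof -
  have "compactin P (Bp r)" by (rule closed_compactin[OF compact_Kbox Bp_Kbox closed_Bp])
  then have "compactin (subtopology P (Bp r)) (Bp r)" by (simp add: compactin_subtopology)
  from image_compactin[OF this cont_id] show ?thesis by simp
qed

end



lemma pnorm_nonneg: "(\<And>j. 0 \<le> N j (x j)) \<Longrightarrow> 0 \<le> pnorm N x k"
proof (induction N x k rule: pnorm.induct)
  case (3 N x k)
  let ?n = "real (k + 2)"
  have a: "0 \<le> N (Suc k) (x (Suc k))" using 3 by simp
  have p: "0 \<le> pnorm N x (Suc k)" using 3 by simp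
  have "0 \<le> (1 - 1 / (?n + 1)) * (N (Suc k) (x (Suc k)) + pnorm N x (Suc k))"
    using a p by (intro mult_nonneg_nonneg) (auto simp: field_simps)
  moreover have "0 \<le> 1 / (?n + 1) * max (N (Suc k) (x (Suc k)) / ?n) (pnorm N x (Suc k))"
    using p by (intro mult_nonneg_nonneg) auto
  ultimately show ?case by (simp add: Let_def)
qed auto

lemma pnorm_step: assumes nn: "\<And>j. 0 \<le> N j (x j)"
  shows "pnorm N x k + N k (x k) / 2 \<le> pnorm N x (Suc k) \<and> pnorm N x (Suc k) \<le> pnorm N x k + N k (x k)"
proof (cases k)
  case 0 then show ?thesis using nn[of 0] by simp
next
  case (Suc k')
  let ?n = "real (k' + 2)"
  define a where "a = N (Suc k') (x (Suc k'))"
  define q where "q = pnorm N x (Suc k')"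
  have a: "0 \<le> a" using nn a_def by simp
  have q: "0 \<le> q" using pnorm_nonneg[of N x, OF nn] q_def by simp
  have eq: "pnorm N x (Suc k) = (1 - 1 / (?n + 1)) * (a + q) + 1 / (?n + 1) * max (a / ?n) q"
    using Suc by (simp add: Let_def a_def q_def)
  have n2: "?n \<ge> 2" by simp
  have lo: "q + a / 2 \<le> (1 - 1 / (?n + 1)) * (a + q) + 1 / (?n + 1) * max (a / ?n) q"
  proof -
    have "1 / (?n + 1) * q \<le> 1 / (?n + 1) * max (a / ?n) q"
      by (intro mult_left_mono) auto
    moreover have "(1 - 1 / (?n + 1)) * (a + q) + 1 / (?n + 1) * q = (1 - 1 / (?n + 1)) * a + q"
      by (simp add: algebra_simps add_divide_distrib)
    moreover have "a / 2 \<le> (1 - 1 / (?n + 1)) * a"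
    proof -
      have "1 / (?n + 1) \<le> 1 / 2" using n2 by (simp add: field_simps)
      then have "1/2 \<le> (1 - 1 / (?n + 1))" by linarith
      then show ?thesis using a mult_right_mono[of "1/2" "1 - 1 / (?n + 1)" a] by simp
    qed
    ultimately show ?thesis by linarith
  qed
  have hi: "(1 - 1 / (?n + 1)) * (a + q) + 1 / (?n + 1) * max (a / ?n) q \<le> q + a"
  proof -
    have m: "max (a / ?n) q \<le> a + q" using a q n2 by (auto simp: field_simps)
    have "1 / (?n + 1) * max (a / ?n) q \<le> 1 / (?n + 1) * (a + q)"
      by (intro mult_left_mono m) auto
    then show ?thesis by (simp add: algebra_simps)
  qed
  show ?thesis using lo hi eq Suc by (simp add: a_def q_def)
qed

lemma pnorm_bounds: assumes nn: "\<And>j. 0 \<le> N j (x j)"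
  shows "(\<Sum>j<k. N j (x j)) / 2 \<le> pnorm N x k \<and> pnorm N x k \<le> (\<Sum>j<k. N j (x j))"
proof (induction k)
  case 0 then show ?case by simp
next
  case (Suc k) then show ?case using pnorm_step[of N x, OF nn, of k] by (simp add: add_divide_distrib)
qed

lemma pnorm_incseq: assumes nn: "\<And>j. 0 \<le> N j (x j)" shows "incseq (pnorm N x)"
proof (rule incseq_SucI)
  fix k show "pnorm N x k \<le> pnorm N x (Suc k)"
    using pnorm_step[of N x, OF nn, of k] nn[of k] by linarith
qed

lemma pnorm_conv:
  assumes nn: "\<And>j. 0 \<le> N j (x j)" and sm: "summable (\<lambda>n. N n (x n))"
  shows "pnorm N x \<longlonglongrightarrow> Xnorm N x \<and> (\<forall>k. pnorm N x k \<le> Xnorm N x)"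
proof -
  have "\<forall>k. pnorm N x k \<le> suminf (\<lambda>n. N n (x n))"
    using pnorm_bounds[of N x, OF nn] sum_le_suminf[OF sm, of "{..<_}"] nn by (meson finite_lessThan order_trans)
  from incseq_convergent[OF pnorm_incseq[of N x, OF nn] this] obtain L where
    L1: "pnorm N x \<longlonglongrightarrow> L" and L2: "\<forall>k. pnorm N x k \<le> L" by blast
  have "Xnorm N x = L" unfolding Xnorm_def using limI[OF L1] by simp
  then show ?thesis using L1 L2 by simp
qed

lemma ball_char:
  assumes nn: "\<And>j. 0 \<le> N j (x j)"
  shows "(summable (\<lambda>n. N n (x n)) \<and> Xnorm N x \<le> 1) \<longleftrightarrow> (\<forall>k. pnorm N x k \<le> 1)"
proof
  assume h: "summable (\<lambda>n. N n (x n)) \<and> Xnorm N x \<le> 1"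
  then show "\<forall>k. pnorm N x k \<le> 1" using pnorm_conv[of N x, OF nn] by (meson order_trans)
next
  assume h: "\<forall>k. pnorm N x k \<le> 1"
  have "(\<Sum>j<k. N j (x j)) \<le> 2" for k using pnorm_bounds[of N x, OF nn, of k] spec[OF h, of k] by linarith
  then have sm: "summable (\<lambda>n. N n (x n))" by (intro summableI_nonneg_bounded[where x=2]) (use nn in auto)
  have "Xnorm N x \<le> 1" using pnorm_conv[of N x, OF nn sm] h by (meson LIMSEQ_le_const2)
  then show "summable (\<lambda>n. N n (x n)) \<and> Xnorm N x \<le> 1" using sm by simp
qed

lemma pnorm_tendsto:
  assumes "\<And>n. (\<lambda>m. N n (y m n)) \<longlonglongrightarrow> N n (x n)"
  shows "(\<lambda>m. pnorm N (y m) k) \<longlonglongrightarrow> pnorm N x k"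
proof -
  have "((\<lambda>m. pnorm N (y m) k) \<longlonglongrightarrow> pnorm N x k) \<and> ((\<lambda>m. pnorm N (y m) (Suc k)) \<longlonglongrightarrow> pnorm N x (Suc k))"
  proof (induction k)
    case 0 then show ?case using assms[of 0] by simp
  next
    case (Suc k)
    then show ?case using assms[of "Suc k"]
      by (simp add: Let_def del: of_nat_add) (intro tendsto_intros, auto)
  qed
  then show ?thesis by blast
qed

lemma pnorm_cont:
  assumes "\<And>n. continuous_map X euclideanreal (\<lambda>x. N n (x n))"
  shows "continuous_map X euclideanreal (\<lambda>x. pnorm N x k)"
proof -
  have "continuous_map X euclideanreal (\<lambda>x. pnorm N x k) \<and> continuous_map X euclideanreal (\<lambda>x. pnorm N x (Suc k))"
  proof (induction k)
    case 0 then show ?case using assms[of 0] by simp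
  next
    case (Suc k)
    then show ?case using assms[of "Suc k"]
      by (simp add: Let_def del: of_nat_add) (intro continuous_intros, auto)
  qed
  then show ?thesis by blast
qed



theorem proposition2p1:
  fixes d :: "nat \<Rightarrow> nat" and N :: "nat \<Rightarrow> (nat \<Rightarrow> real) \<Rightarrow> real"
  assumes norms: "\<And>n. is_norm_on (V d n) (N n)"
    and bases: "\<And>n. normalized_1_unconditional (d n) (N n)"
  shows "compactin (pointwise_top d N) (unit_ball d N) \<and>
         (\<forall>xs x. (\<forall>m. xs m \<in> Xspace d N \<and> Xnorm N (xs m) \<le> 1) \<longrightarrow> x \<in> Xspace d N \<longrightarrow>
           (\<forall>n. (\<lambda>m. N n (\<lambda>i. xs m n i - x n i)) \<longlonglongrightarrow> 0) \<longrightarrow> Xnorm N x \<le> 1)"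
proof -
  have nrmk: "is_norm_on (Vk (d n)) (N n)" for n using norms[of n] by (simp add: V_Vk)
  have XT: "Xn_top d N n = T (d n) (N n)" for n
    unfolding Xn_top_def T_def[OF nrmk bases] V_Vk
    by (rule arg_cong[where f=topology], rule ext) (simp add: openp_def[OF nrmk bases])
  let ?P = "product_topology (Xn_top d N) UNIV"
  have topP: "x \<in> topspace ?P \<longleftrightarrow> (\<forall>n. x n \<in> Vk (d n))" for x
    by (simp add: XT topspace_T[OF nrmk bases] PiE_UNIV_domain Pi_iff)
  have nnV: "(\<And>n. x n \<in> Vk (d n)) \<Longrightarrow> 0 \<le> N j (x j)" for x j
    using p_nonneg[OF nrmk bases] by blast
  have ballchar: "unit_ball d N = {x \<in> topspace ?P. \<forall>k. pnorm N x k \<le> 1}"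
  proof (intro set_eqI iffI)
    fix x assume x: "x \<in> unit_ball d N"
    then have xV: "\<And>n. x n \<in> Vk (d n)" by (simp add: unit_ball_def Xspace_def V_Vk)
    then show "x \<in> {x \<in> topspace ?P. \<forall>k. pnorm N x k \<le> 1}"
      using ball_char[of N x, OF nnV[OF xV]] x topP by (auto simp: unit_ball_def Xspace_def)
  next
    fix x assume x: "x \<in> {x \<in> topspace ?P. \<forall>k. pnorm N x k \<le> 1}"
    then have xV: "\<And>n. x n \<in> Vk (d n)" using topP by blast
    then show "x \<in> unit_ball d N"
      using ball_char[of N x, OF nnV[OF xV]] x by (auto simp: unit_ball_def Xspace_def V_Vk)
  qed
  have contN: "continuous_map ?P euclideanreal (\<lambda>x. N n (x n))" for n
  proof -
    have "continuous_map (Xn_top d N n) euclideanreal (N n)"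
      using cont_p[OF nrmk bases] XT by simp
    from continuous_map_compose[OF continuous_map_product_projection[of n UNIV "Xn_top d N"] this]
    show ?thesis by (simp add: o_def)
  qed
  have closed_ball: "closedin ?P (unit_ball d N)"
  proof -
    have eq: "unit_ball d N = \<Inter> (range (\<lambda>k. {x \<in> topspace ?P. pnorm N x k \<in> {..1}}))"
      unfolding ballchar by auto
    show ?thesis unfolding eq
    proof (rule closedin_Inter)
      fix S assume "S \<in> range (\<lambda>k. {x \<in> topspace ?P. pnorm N x k \<in> {..1}})"
      then obtain k where S: "S = {x \<in> topspace ?P. pnorm N x k \<in> {..1}}" by blast
      have "closedin euclideanreal {..(1::real)}" by simp
      from closedin_continuous_map_preimage[OF pnorm_cont[of ?P N k, OF contN] this]
      show "closedin ?P S" unfolding S .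
    qed auto
  qed
  let ?K = "PiE UNIV (\<lambda>n. Bp (d n) (N n) 2)"
  have cK: "compactin ?P ?K"
    unfolding compactin_PiE using compact_Bp[OF nrmk bases] XT by simp
  have subK: "unit_ball d N \<subseteq> ?K"
  proof
    fix x assume x: "x \<in> unit_ball d N"
    then have xV: "\<And>n. x n \<in> Vk (d n)" by (simp add: unit_ball_def Xspace_def V_Vk)
    have pk: "\<forall>k. pnorm N x k \<le> 1" using x ballchar by blast
    have "N n (x n) \<le> 2" for n
    proof -
      have "N n (x n) \<le> (\<Sum>j<Suc n. N j (x j))"
        by (rule member_le_sum) (use nnV[OF xV] in auto)
      also have "\<dots> \<le> 2 * pnorm N x (Suc n)" using pnorm_bounds[of N x, OF nnV[OF xV], of "Suc n"] by simp
      also have "\<dots> \<le> 2" using spec[OF pk, of "Suc n"] by simp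
      finally show ?thesis .
    qed
    then show "x \<in> ?K" using xV by (simp add: Bp_def[OF nrmk bases] PiE_UNIV_domain Pi_iff)
  qed
  have part1: "compactin (pointwise_top d N) (unit_ball d N)"
    unfolding pointwise_top_def compactin_subtopology
    using closed_compactin[OF cK subK closed_ball] by (auto simp: unit_ball_def)
  have part2: "Xnorm N x \<le> 1"
    if xs: "\<forall>m. xs m \<in> Xspace d N \<and> Xnorm N (xs m) \<le> 1" and x: "x \<in> Xspace d N"
      and lim: "\<forall>n. (\<lambda>m. N n (\<lambda>i. xs m n i - x n i)) \<longlonglongrightarrow> 0" for xs x
  proof -
    have xV: "\<And>n. x n \<in> Vk (d n)" using x by (simp add: Xspace_def V_Vk)
    have xsV: "\<And>n. xs m n \<in> Vk (d n)" for m using xs by (simp add: Xspace_def V_Vk)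
    have pm: "pnorm N (xs m) k \<le> 1" for m k
      using ball_char[of N "xs m", OF nnV[OF xsV]] xs by (auto simp: Xspace_def)
    have tN: "(\<lambda>m. N n (xs m n)) \<longlonglongrightarrow> N n (x n)" for n
    proof -
      have "(\<lambda>m. N n (xs m n) - N n (x n)) \<longlonglongrightarrow> 0"
      proof (rule Lim_null_comparison)
        show "\<forall>\<^sub>F m in sequentially. norm (N n (xs m n) - N n (x n)) \<le> N n (\<lambda>i. xs m n i - x n i)"
          using p_lip[OF nrmk bases xV xsV] by simp
        show "(\<lambda>m. N n (\<lambda>i. xs m n i - x n i)) \<longlonglongrightarrow> 0" using lim by simp
      qed
      then show ?thesis by (rule LIM_zero_cancel)
    qed
    have "pnorm N x k \<le> 1" for k
      using LIMSEQ_le_const2[OF pnorm_tendsto[of N xs x, OF tN]] pm by blast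
    then show ?thesis using ball_char[of N x, OF nnV[OF xV]] x by (auto simp: Xspace_def)
  qed
  show ?thesis using part1 part2 by blast
qed


end
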